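(* Let $N\ge4$, let $e_1,\dots,e_N$ be the standard basis of $\mathbb{R}^N$, $F(x)=\prod_{i=1}^N|x-e_i|^2$, $f=\log F$, and $B=\frac1N\sum_{i=1}^N e_i$. Then $F$ has its $N$ absolute minima at $e_1,\dots,e_N$; $B$ is a critical point of $f$ whose Hessian has the eigenvalue $\frac{2N^2}{N-1}$ with multiplicity $1$ (eigenvector $B$) and the eigenvalue $2(N-3)\left(\frac{N}{N-1}\right)^2$ with multiplicity $N-1$, so $B$ is a nondegenerate local minimum; and the $N$ points $Q_i=\frac{2}{N-1}B+\frac{N-3}{N-1}e_i$ ($1\le i\le N$) are nondegenerate critical points of $f$ of negativity index $1$.
   Context: $|\cdot|$ is the Euclidean norm. The negativity index of a nondegenerate critical point is the number of negative eigenvalues of the Hessian. *)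

theory Defs
  imports "HOL-Analysis.Analysis"
begin

definition ebasis :: "'n::finite \<Rightarrow> real^'n" where
  "ebasis i = axis i 1"

definition Fprod :: "real^'n::finite \<Rightarrow> real" where
  "Fprod x = (\<Prod>i\<in>UNIV. (norm (x - ebasis i))\<^sup>2)"

definition flog :: "real^'n::finite \<Rightarrow> real" where
  "flog x = ln (Fprod x)"

definition bary :: "real^'n::finite" where
  "bary = (1 / real CARD('n)) *\<^sub>R (\<Sum>i\<in>UNIV. ebasis i)"

definition Qpt :: "'n::finite \<Rightarrow> real^'n" where
  "Qpt i = (2 / (real CARD('n) - 1)) *\<^sub>R bary
          + ((real CARD('n) - 3) / (real CARD('n) - 1)) *\<^sub>R ebasis i"

definition critical_point :: "(real^'n::finite \<Rightarrow> real) \<Rightarrow> real^'n \<Rightarrow> bool" where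
  "critical_point g x \<longleftrightarrow> (g has_derivative (\<lambda>h. 0)) (at x)"

definition has_hessian :: "(real^'n::finite \<Rightarrow> real) \<Rightarrow> real^'n^'n \<Rightarrow> real^'n \<Rightarrow> bool" where
  "has_hessian g H x \<longleftrightarrow>
     (\<exists>grad. (\<forall>\<^sub>F y in nhds x. (g has_derivative (\<lambda>h. grad y \<bullet> h)) (at y))
            \<and> (grad has_derivative (\<lambda>h. H *v h)) (at x))"

definition eigenspace :: "real^'n^'n::finite \<Rightarrow> real \<Rightarrow> (real^'n) set" where
  "eigenspace H l = {v. H *v v = l *\<^sub>R v}"

definition is_eigenvalue :: "real^'n^'n::finite \<Rightarrow> real \<Rightarrow> bool" where
  "is_eigenvalue H l \<longleftrightarrow> (\<exists>v. v \<noteq> 0 \<and> H *v v = l *\<^sub>R v)"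

text \<open>Multiplicity of an eigenvalue (dimension of eigenspace; equals algebraic
  multiplicity for the symmetric Hessian).\<close>
definition eig_mult :: "real^'n^'n::finite \<Rightarrow> real \<Rightarrow> nat" where
  "eig_mult H l = dim (eigenspace H l)"

definition neg_index :: "real^'n^'n::finite \<Rightarrow> nat" where
  "neg_index H = (\<Sum>l\<in>{l. l < 0 \<and> is_eigenvalue H l}. eig_mult H l)"

definition nondegenerate_critical_point :: "(real^'n::finite \<Rightarrow> real) \<Rightarrow> real^'n \<Rightarrow> bool" where
  "nondegenerate_critical_point g x \<longleftrightarrow>
     critical_point g x \<and> (\<exists>H. has_hessian g H x \<and> det H \<noteq> 0)"

definition local_min :: "(real^'n::finite \<Rightarrow> real) \<Rightarrow> real^'n \<Rightarrow> bool" where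
  "local_min g x \<longleftrightarrow> (\<exists>e>0. \<forall>y\<in>ball x e. g x \<le> g y)"

end

theory Submission
  imports Defs
begin
definition ones :: "real^'n::finite" where "ones = (\<Sum>i\<in>UNIV. ebasis i)"

lemma ebasis_inner[simp]: "ebasis k \<bullet> h = h $ k" "h \<bullet> ebasis k = h $ k"
  by (simp_all add: ebasis_def inner_axis inner_commute)

lemma ebasis_comp[simp]: "ebasis k $ j = (if j = k then 1 else 0)"
  by (simp add: ebasis_def axis_def)

lemma ones_comp[simp]: "ones $ j = 1"
  by (simp add: ones_def sum_component)

lemma ones_inner: "ones \<bullet> h = (\<Sum>j\<in>UNIV. h $ j)"
  by (simp add: ones_def inner_sum_left)

lemma ones_ones: "ones \<bullet> (ones::real^'n::finite) = real CARD('n)"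
  by (simp add: ones_inner)

lemma sum_ebasis_expand: "(\<Sum>k\<in>UNIV. (h $ k) *\<^sub>R ebasis k) = (h::real^'n::finite)"
  by (simp add: vec_eq_iff sum_component if_distrib cong: if_cong)

lemma sum_outer:
  fixes x h :: "real^'n::finite"
  shows "(\<Sum>k\<in>UNIV. ((x - ebasis k) \<bullet> h) *\<^sub>R (x - ebasis k))
     = (real CARD('n) * (x \<bullet> h) - ones \<bullet> h) *\<^sub>R x - (x \<bullet> h) *\<^sub>R ones + h"
proof -
  have "(\<Sum>k\<in>UNIV. ((x - ebasis k) \<bullet> h) *\<^sub>R (x - ebasis k))
     = (\<Sum>k\<in>UNIV. (x \<bullet> h) *\<^sub>R x - (x \<bullet> h) *\<^sub>R ebasis k - (h $ k) *\<^sub>R x + (h $ k) *\<^sub>R ebasis k)"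
    by (rule sum.cong) (auto simp: inner_diff_left algebra_simps)
  also have "\<dots> = real CARD('n) *\<^sub>R ((x \<bullet> h) *\<^sub>R x) - (x \<bullet> h) *\<^sub>R ones - (ones \<bullet> h) *\<^sub>R x + h"
    by (simp add: sum.distrib sum_subtractf scaleR_sum_right[symmetric] scaleR_sum_left[symmetric]
          ones_def[symmetric] sum_ebasis_expand ones_inner sum_constant_scaleR del: sum_constant)
  finally show ?thesis by (simp add: algebra_simps)
qed

definition qn :: "real^'n::finite \<Rightarrow> 'n \<Rightarrow> real" where
  "qn y k = (y - ebasis k) \<bullet> (y - ebasis k)"

definition grad :: "real^'n::finite \<Rightarrow> real^'n" where
  "grad y = (\<Sum>k\<in>UNIV. (2 / qn y k) *\<^sub>R (y - ebasis k))"

definition LH :: "real^'n::finite \<Rightarrow> real^'n \<Rightarrow> real^'n" where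
  "LH x h = (\<Sum>k\<in>UNIV. (2 / qn x k) *\<^sub>R h - (4 * ((x - ebasis k) \<bullet> h) / (qn x k)^2) *\<^sub>R (x - ebasis k))"

lemma qn_pos: "y \<notin> range ebasis \<Longrightarrow> qn y k > 0"
  unfolding qn_def by (metis inner_gt_zero_iff rangeI right_minus_eq)

lemma norm_qn: "(norm (y - ebasis k))^2 = qn y k"
  by (simp add: qn_def power2_norm_eq_inner)

lemma flog_eq: "y \<notin> range ebasis \<Longrightarrow> flog y = (\<Sum>k\<in>UNIV. ln (qn y k))"
proof -
  assume a: "y \<notin> range ebasis"
  have "\<And>k. qn y k \<noteq> 0" using qn_pos[OF a] by (metis less_irrefl)
  then show ?thesis by (simp add: flog_def Fprod_def norm_qn ln_prod)
qed

lemma open_nonbasis: "open (- range (ebasis::'n::finite \<Rightarrow> real^'n))"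
  by (simp add: open_Compl finite_imp_closed)

lemma qn_deriv: "((\<lambda>z. qn z k) has_derivative (\<lambda>h. 2 * ((y - ebasis k) \<bullet> h))) (at y)"
  unfolding qn_def
  by (rule derivative_eq_intros refl | simp add: inner_commute)+

lemma flog_deriv:
  assumes "y \<notin> range ebasis"
  shows "(flog has_derivative (\<lambda>h. grad y \<bullet> h)) (at y)"
proof -
  have "((\<lambda>z. \<Sum>k\<in>UNIV. ln (qn z k)) has_derivative
      (\<lambda>h. \<Sum>k\<in>UNIV. 2 * ((y - ebasis k) \<bullet> h) * inverse (qn y k))) (at y)"
    apply (rule has_derivative_sum)
    apply (rule has_derivative_ln[OF _ qn_deriv])
    using qn_pos[OF assms] by auto
  then have "((\<lambda>z. \<Sum>k\<in>UNIV. ln (qn z k)) has_derivative (\<lambda>h. grad y \<bullet> h)) (at y)"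
    by (rule has_derivative_eq_rhs) (auto simp: grad_def inner_sum_left inner_diff_left divide_inverse algebra_simps intro!: ext sum.cong)
  then show ?thesis
    apply (rule has_derivative_transform_within_open[OF _ open_nonbasis])
    using assms by (auto simp: flog_eq)
qed

lemma diff_deriv: "((\<lambda>z. z - (e::'a::real_normed_vector)) has_derivative (\<lambda>h. h)) F"
  using has_derivative_diff[OF has_derivative_ident has_derivative_const] by simp

lemma term_deriv:
  assumes "x \<notin> range ebasis"
  shows "((\<lambda>z. (2 / qn z k) *\<^sub>R (z - ebasis k)) has_derivative
     (\<lambda>h. (2 / qn x k) *\<^sub>R h - (4 * ((x - ebasis k) \<bullet> h) / (qn x k)^2) *\<^sub>R (x - ebasis k))) (at x)"
proof -
  have q: "qn x k \<noteq> 0" using qn_pos[OF assms, of k] by linarith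
  show ?thesis
    apply (rule has_derivative_eq_rhs)
     apply (rule has_derivative_scaleR[OF has_derivative_divide[OF has_derivative_const qn_deriv q] diff_deriv])
    using q by (auto intro!: ext simp: field_simps power2_eq_square)
qed

lemma grad_deriv:
  assumes "x \<notin> range ebasis"
  shows "(grad has_derivative LH x) (at x)"
  unfolding grad_def LH_def[abs_def]
  by (rule has_derivative_sum[OF term_deriv[OF assms]])

lemma LH_linear: "x \<notin> range ebasis \<Longrightarrow> linear (LH x)"
  by (rule has_derivative_linear[OF grad_deriv])

lemma LH_matrix: "x \<notin> range ebasis \<Longrightarrow> matrix (LH x) *v h = LH x h"
  by (metis matrix_vector_mul(2) LH_linear)

lemma hessian_gen:
  assumes x: "x \<notin> range ebasis"
  shows "has_hessian flog (matrix (LH x)) x"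
  unfolding has_hessian_def
proof (intro exI conjI)
  show "\<forall>\<^sub>F y in nhds x. (flog has_derivative (\<lambda>h. grad y \<bullet> h)) (at y)"
    unfolding eventually_nhds
    apply (rule exI[of _ "- range ebasis"])
    using x open_nonbasis flog_deriv by auto
  show "(grad has_derivative (\<lambda>h. matrix (LH x) *v h)) (at x)"
    using grad_deriv[OF x] by (simp add: LH_matrix[OF x])
qed

lemma critical_gen: "x \<notin> range ebasis \<Longrightarrow> grad x = 0 \<Longrightarrow> critical_point flog x"
  unfolding critical_point_def using flog_deriv[of x] by simp
lemma sum_except:
  assumes "\<And>k. k \<noteq> i \<Longrightarrow> f k = g k"
  shows "(\<Sum>k\<in>(UNIV::'n::finite set). f k) = (\<Sum>k\<in>UNIV. g k) - g i + (f i :: 'a::ab_group_add)"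
proof -
  have "(\<Sum>k\<in>UNIV. f k) = f i + (\<Sum>k\<in>UNIV-{i}. f k)" by (simp add: sum.remove)
  also have "(\<Sum>k\<in>UNIV-{i}. f k) = (\<Sum>k\<in>UNIV-{i}. g k)" using assms by (intro sum.cong) auto
  also have "\<dots> = (\<Sum>k\<in>UNIV. g k) - g i" using sum.remove[of UNIV i g] by simp
  finally show ?thesis by (simp add: algebra_simps)
qed

lemma LH_gen: "LH x h = (\<Sum>k\<in>UNIV. (2 / qn x k) *\<^sub>R h) - (\<Sum>k\<in>UNIV. (4 / (qn x k)^2) *\<^sub>R (((x - ebasis k) \<bullet> h) *\<^sub>R (x - ebasis k)))"
  unfolding LH_def by (simp add: sum_subtractf)

lemma card_ge1: "real CARD('n::finite) \<ge> 1"
  by (simp add: Suc_leI)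

lemma bary_eq: "bary = (1 / real CARD('n::finite)) *\<^sub>R (ones :: real^'n)"
  by (simp add: bary_def ones_def)

lemma bary_comp[simp]: "(bary :: real^'n::finite) $ j = 1 / real CARD('n)"
  by (simp add: bary_eq)

lemma bary_inner: "(bary :: real^'n::finite) \<bullet> h = (ones \<bullet> h) / real CARD('n)"
  by (simp add: bary_eq)

lemma qn_bary: "qn (bary::real^'n::finite) k = (real CARD('n) - 1) / real CARD('n)"
proof -
  have N: "real CARD('n) \<noteq> 0" by simp
  show ?thesis unfolding qn_def using N
    by (simp add: inner_diff_left inner_diff_right bary_inner ones_ones bary_eq field_simps)
qed

lemma bary_nonbasis:
  assumes "CARD('n::finite) \<ge> 2"
  shows "(bary::real^'n) \<notin> range ebasis"
proof
  assume "(bary::real^'n) \<in> range ebasis"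
  then obtain k where "bary = (ebasis k :: real^'n)" by auto
  then have "(bary::real^'n) $ k = (ebasis k :: real^'n) $ k" by metis
  then have "1 / real CARD('n) = 1" by simp
  then show False using assms by simp
qed

lemma sum_diff_basis: "(\<Sum>k\<in>UNIV. x - ebasis k) = real CARD('n::finite) *\<^sub>R x - (ones::real^'n)"
  by (simp add: sum_subtractf ones_def sum_constant_scaleR del: sum_constant)

lemma grad_bary: "grad (bary::real^'n::finite) = 0"
  unfolding grad_def qn_bary
  by (simp add: scaleR_sum_right[symmetric] sum_diff_basis bary_eq)

lemma LH_bary:
  assumes N2: "CARD('n::finite) \<ge> 2"
  shows "LH (bary::real^'n::finite) h =
     (2 * real CARD('n)^2 / (real CARD('n) - 1) - 4 * real CARD('n)^2 / (real CARD('n) - 1)^2) *\<^sub>R h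
     + (4 * real CARD('n)^2 / (real CARD('n) - 1)^2 * (ones \<bullet> h)) *\<^sub>R bary"
proof -
  let ?N = "real CARD('n)"
  let ?q = "(?N - 1) / ?N"
  have "LH bary h = (?N * (2 / ?q)) *\<^sub>R h - (4 / ?q^2) *\<^sub>R (\<Sum>k\<in>UNIV. ((bary - ebasis k) \<bullet> h) *\<^sub>R (bary - ebasis k))"
    unfolding LH_gen qn_bary by (simp add: scaleR_sum_right sum_constant_scaleR del: sum_constant)
  also have "(\<Sum>k\<in>UNIV. ((bary - ebasis k) \<bullet> h) *\<^sub>R (bary - ebasis k)) = h - (ones \<bullet> h) *\<^sub>R bary"
    unfolding sum_outer by (simp add: bary_inner bary_eq)
  finally have e: "LH bary h = (?N * (2 / ?q)) *\<^sub>R h - (4 / ?q^2) *\<^sub>R (h - (ones \<bullet> h) *\<^sub>R bary)" .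
  have N1: "?N - 1 \<noteq> 0" "?N \<noteq> 0" using N2 by auto
  have 1: "?N * (2 / ?q) = 2 * ?N^2 / (?N - 1)" using N1 by (simp add: field_simps power2_eq_square)
  have 2: "4 / ?q^2 = 4 * ?N^2 / (?N - 1)^2" using N1 by (simp add: field_simps power2_eq_square)
  show ?thesis unfolding e 1 2 by (simp add: algebra_simps)
qed

lemma ones_nz: "(ones::real^'n::finite) \<noteq> 0"
proof
  assume "(ones::real^'n) = 0"
  then have "(ones::real^'n) $ undefined = 0" by simp
  then show False by simp
qed

lemma ones_bary: "ones \<bullet> (bary::real^'n::finite) = 1"
  by (simp add: bary_eq ones_ones)

lemma bary_nz: "(bary::real^'n::finite) \<noteq> 0"
  using ones_bary by (metis inner_zero_right zero_neq_one)

lemma eig_bary_gen: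
  fixes H :: "real^'n^'n::finite"
  assumes H: "\<And>h. H *v h = \<nu> *\<^sub>R h + (C * (ones \<bullet> h)) *\<^sub>R bary" and C: "C \<noteq> 0"
  shows "H *v bary = (\<nu> + C) *\<^sub>R bary"
    "eig_mult H (\<nu> + C) = 1"
    "eig_mult H \<nu> = CARD('n) - 1"
proof -
  show "H *v bary = (\<nu> + C) *\<^sub>R bary" by (simp add: H ones_bary algebra_simps)
  have "eigenspace H (\<nu> + C) = span {bary}"
  proof (rule set_eqI)
    fix h :: "real^'n"
    have "h \<in> eigenspace H (\<nu> + C) \<longleftrightarrow> C *\<^sub>R ((ones \<bullet> h) *\<^sub>R bary) = C *\<^sub>R h"
      by (simp add: eigenspace_def H algebra_simps)
    also have "\<dots> \<longleftrightarrow> h = (ones \<bullet> h) *\<^sub>R bary" using C by (metis scaleR_left_imp_eq)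
    also have "\<dots> \<longleftrightarrow> h \<in> span {bary}"
      unfolding span_singleton
      by (auto simp: ones_bary)
    finally show "h \<in> eigenspace H (\<nu> + C) \<longleftrightarrow> h \<in> span {bary}" .
  qed
  then show "eig_mult H (\<nu> + C) = 1" unfolding eig_mult_def using bary_nz by simp
  have "eigenspace H \<nu> = {h. ones \<bullet> h = 0}"
    using C bary_nz by (auto simp: eigenspace_def H)
  then show "eig_mult H \<nu> = CARD('n) - 1" unfolding eig_mult_def
    using dim_hyperplane[OF ones_nz] by simp
qed

lemma det_nz_of_ker:
  fixes H :: "real^'n^'n::finite"
  assumes "\<And>h. H *v h = 0 \<Longrightarrow> h = 0"
  shows "det H \<noteq> 0"
  using assms invertible_det_nz invertible_left_inverse matrix_left_invertible_ker by metis

lemma eig_Q_gen: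
  fixes H :: "real^'n^'n::finite" and i :: 'n
  defines "w \<equiv> ones - real CARD('n) *\<^sub>R ebasis i"
  assumes H: "\<And>h. H *v h = \<mu> *\<^sub>R h + f1 (ones \<bullet> h) (h $ i) *\<^sub>R ones + f2 (ones \<bullet> h) (h $ i) *\<^sub>R ebasis i"
    and f0: "f1 0 0 = 0" "f2 0 0 = 0"
    and L1: "H *v ones = l1 *\<^sub>R ones" and L2: "H *v w = l2 *\<^sub>R w"
    and N2: "CARD('n) \<ge> 2"
    and ev: "H *v h = l *\<^sub>R h" "l \<noteq> l1" "l \<noteq> \<mu>"
  shows "h \<in> span {w}"
proof -
  let ?N = "real CARD('n)"
  have Nn: "?N \<noteq> 0" "1 - ?N \<noteq> 0" using N2 by auto
  define p where "p = ones \<bullet> h"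
  define t where "t = h $ i"
  define \<alpha> where "\<alpha> = p / ?N"
  define \<beta> where "\<beta> = (t - \<alpha>) / (1 - ?N)"
  define z where "z = h - \<alpha> *\<^sub>R ones - \<beta> *\<^sub>R w"
  have pw: "ones \<bullet> w = 0" and tw: "w $ i = 1 - ?N"
    by (simp_all add: w_def inner_diff_right ones_ones)
  have pz: "ones \<bullet> z = 0" unfolding z_def using Nn
    by (simp add: inner_diff_right pw ones_ones \<alpha>_def p_def)
  have tz: "z $ i = 0" unfolding z_def using Nn
    by (simp add: tw \<beta>_def t_def field_simps)
  have hz: "h = z + \<alpha> *\<^sub>R ones + \<beta> *\<^sub>R w" by (simp add: z_def)
  have Hz: "H *v z = \<mu> *\<^sub>R z" using H[of z] by (simp add: pz tz f0)
  have "H *v h = H *v z + \<alpha> *\<^sub>R (H *v ones) + \<beta> *\<^sub>R (H *v w)"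
    unfolding hz by (simp add: matrix_vector_right_distrib matrix_vector_mult_scaleR)
  then have eq: "l *\<^sub>R (z + \<alpha> *\<^sub>R ones + \<beta> *\<^sub>R w) = \<mu> *\<^sub>R z + (\<alpha> * l1) *\<^sub>R ones + (\<beta> * l2) *\<^sub>R w"
    using ev(1) hz Hz L1 L2 by simp
  have "ones \<bullet> (l *\<^sub>R (z + \<alpha> *\<^sub>R ones + \<beta> *\<^sub>R w)) = ones \<bullet> (\<mu> *\<^sub>R z + (\<alpha> * l1) *\<^sub>R ones + (\<beta> * l2) *\<^sub>R w)"
    using eq by simp
  then have "l * \<alpha> * ?N = \<alpha> * l1 * ?N" by (simp add: inner_add_right pz pw ones_ones algebra_simps)
  then have a0: "\<alpha> = 0" using ev(2) Nn by simp
  then have eq2: "(l - \<mu>) *\<^sub>R z = (\<beta> * (l2 - l)) *\<^sub>R w" using eq by (simp add: algebra_simps)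
  then have "((l - \<mu>) *\<^sub>R z) $ i = ((\<beta> * (l2 - l)) *\<^sub>R w) $ i" by (rule arg_cong[where f="\<lambda>v. v $ i"])
  then have "\<beta> * (l2 - l) = 0" using tz tw Nn by simp
  then have "(l - \<mu>) *\<^sub>R z = 0" using eq2 by simp
  then have "z = 0" using ev(3) by simp
  then have "h = \<beta> *\<^sub>R w" using hz a0 by simp
  then show ?thesis by (simp add: span_singleton) (rule rangeI)
qed

lemma eig_Q_conseq:
  fixes H :: "real^'n^'n::finite" and i :: 'n
  assumes H: "\<And>h. H *v h = \<mu> *\<^sub>R h + f1 (ones \<bullet> h) (h $ i) *\<^sub>R ones + f2 (ones \<bullet> h) (h $ i) *\<^sub>R ebasis i"
    and f0: "f1 0 0 = 0" "f2 0 0 = 0"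
    and L1: "H *v ones = l1 *\<^sub>R ones" and L2: "H *v (ones - real CARD('n) *\<^sub>R ebasis i) = l2 *\<^sub>R (ones - real CARD('n) *\<^sub>R ebasis i)"
    and N2: "CARD('n) \<ge> 2"
    and sg: "l1 > 0" "\<mu> > 0" "l2 < 0"
  shows "neg_index H = 1" "det H \<noteq> 0"
proof -
  define w where "w = ones - real CARD('n) *\<^sub>R ebasis i"
  note G = eig_Q_gen[OF H f0 L1 L2 N2, folded w_def]
  have wnz: "w \<noteq> 0"
  proof
    assume "w = 0"
    then have "w $ i = 0" by simp
    then show False using N2 by (simp add: w_def)
  qed
  have es: "eigenspace H l2 = span {w}"
  proof (rule set_eqI, rule iffI)
    fix h assume "h \<in> eigenspace H l2"
    then show "h \<in> span {w}" using G[of h l2] sg by (auto simp: eigenspace_def)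
  next
    fix h assume "h \<in> span {w}"
    then obtain c where "h = c *\<^sub>R w" by (auto simp: span_singleton)
    then show "h \<in> eigenspace H l2" using L2 by (simp add: eigenspace_def w_def[symmetric] matrix_vector_mult_scaleR)
  qed
  have negs: "{l. l < 0 \<and> is_eigenvalue H l} = {l2}"
  proof (rule set_eqI, rule iffI)
    fix l assume "l \<in> {l. l < 0 \<and> is_eigenvalue H l}"
    then obtain v where v: "v \<noteq> 0" "H *v v = l *\<^sub>R v" "l < 0" by (auto simp: is_eigenvalue_def)
    then have "v \<in> span {w}" using G[of v l] sg by auto
    then obtain c where c: "v = c *\<^sub>R w" by (auto simp: span_singleton)
    with v have "c \<noteq> 0" by auto
    from v(2) c L2 have "(c * l2) *\<^sub>R w = (c * l) *\<^sub>R w" by (simp add: w_def[symmetric] matrix_vector_mult_scaleR)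
    then have "c * l2 = c * l" using wnz by (metis scaleR_cancel_right)
    then show "l \<in> {l2}" using \<open>c \<noteq> 0\<close> by simp
  next
    fix l assume "l \<in> {l2}"
    then show "l \<in> {l. l < 0 \<and> is_eigenvalue H l}"
      using sg wnz L2 by (auto simp: is_eigenvalue_def w_def[symmetric])
  qed
  show "neg_index H = 1" unfolding neg_index_def negs eig_mult_def using wnz by (simp add: es)
  show "det H \<noteq> 0"
  proof (rule det_nz_of_ker)
    fix h assume h0: "H *v h = 0"
    then have "h \<in> span {w}" using G[of h 0] sg by auto
    then obtain c where c: "h = c *\<^sub>R w" by (auto simp: span_singleton)
    from h0 c L2 have "(c * l2) *\<^sub>R w = 0" by (simp add: w_def[symmetric] matrix_vector_mult_scaleR)
    then have "c = 0" using wnz sg by simp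
    then show "h = 0" using c by simp
  qed
qed

definition muQ :: "real \<Rightarrow> real \<Rightarrow> real \<Rightarrow> real" where
  "muQ n r s = n * (2 / s) - 2 / s + 2 / r - 4 / s^2"
definition F1 :: "real \<Rightarrow> real \<Rightarrow> real \<Rightarrow> real \<Rightarrow> real \<Rightarrow> real \<Rightarrow> real \<Rightarrow> real" where
  "F1 n a b r s p t = - (4 / s^2) * ((n * (a*p + b*t) - p) * a - (a*p + b*t)) - (4 / r^2 - 4 / s^2) * (a*p + (b-1)*t) * a"
definition F2 :: "real \<Rightarrow> real \<Rightarrow> real \<Rightarrow> real \<Rightarrow> real \<Rightarrow> real \<Rightarrow> real \<Rightarrow> real" where
  "F2 n a b r s p t = - (4 / s^2) * (n * (a*p + b*t) - p) * b - (4 / r^2 - 4 / s^2) * (a*p + (b-1)*t) * (b - 1)"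

context
  fixes n m k :: real
  assumes n4: "n \<ge> 4" and m: "m = n - 1" and k: "k = n - 2"
begin

lemma nz: "n \<noteq> 0" "m \<noteq> 0" "k \<noteq> 0" using n4 m k by auto

lemma sc_qi: "n * (2 / (n * m))^2 + 2 * (2 / (n * m)) * ((n - 3) / m) + ((n - 3) / m)^2
     - 2 * (2 / (n * m) + (n - 3) / m) + 1 = 4 / (n * m)"
  using nz apply (simp add: field_simps power2_eq_square)
  unfolding m by (simp add: algebra_simps)

lemma sc_qk: "n * (2 / (n * m))^2 + 2 * (2 / (n * m)) * ((n - 3) / m) + ((n - 3) / m)^2
     - 2 * (2 / (n * m)) + 1 = 2 * k / n"
  using nz apply (simp add: field_simps power2_eq_square)
  unfolding m k by (simp add: algebra_simps)

lemma sc_g1: "(2 / (2*k/n)) * (n * (2 / (n * m)) - 1) - (2 / (2*k/n)) * (2 / (n * m)) + (2 / (4 / (n*m))) * (2 / (n * m)) = 0"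
  using nz apply (simp add: field_simps power2_eq_square)
  unfolding m k by (simp add: algebra_simps)

lemma sc_g2: "(2 / (2*k/n)) * n * ((n - 3) / m) - (2 / (2*k/n)) * ((n - 3) / m - 1) + (2 / (4 / (n*m))) * ((n - 3) / m - 1) = 0"
  using nz apply (simp add: field_simps power2_eq_square)
  unfolding m k by (simp add: algebra_simps)

lemma sc_mu: "muQ n (4 / (n*m)) (2*k/n) = n^3 * (n - 3) / (2 * k^2)"
  unfolding muQ_def
  using nz apply (simp add: field_simps power2_eq_square)
  unfolding m k by (simp add: algebra_simps power3_eq_cube)

lemma sc_e1a: "F2 n (2 / (n * m)) ((n - 3) / m) (4 / (n*m)) (2*k/n) n 1 = 0"
  unfolding F2_def
  using nz apply (simp add: field_simps power2_eq_square)
  unfolding m k by (simp add: algebra_simps)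

lemma sc_e1b: "muQ n (4 / (n*m)) (2*k/n) + F1 n (2 / (n * m)) ((n - 3) / m) (4 / (n*m)) (2*k/n) n 1 = n^2 * m / (2 * k)"
  unfolding F1_def muQ_def
  using nz apply (simp add: field_simps power2_eq_square)
  unfolding m k by (simp add: algebra_simps)

lemma sc_e2a: "muQ n (4 / (n*m)) (2*k/n) + F1 n (2 / (n * m)) ((n - 3) / m) (4 / (n*m)) (2*k/n) 0 (1 - n) = - (n^2 * (n - 3) / (2 * k))"
  unfolding F1_def muQ_def
  using nz apply (simp add: field_simps power2_eq_square)
  unfolding m k by (simp add: algebra_simps)

lemma sc_e2b: "- n * muQ n (4 / (n*m)) (2*k/n) + F2 n (2 / (n * m)) ((n - 3) / m) (4 / (n*m)) (2*k/n) 0 (1 - n) = - n * (- (n^2 * (n - 3) / (2 * k)))"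
  unfolding F2_def muQ_def
  using nz apply (simp add: field_simps power2_eq_square)
  unfolding m k by (simp add: algebra_simps)

end

lemma sum_except_real:
  assumes "\<And>k. k \<noteq> i \<Longrightarrow> f k = (s::real)"
  shows "(\<Sum>k\<in>(UNIV::'n::finite set). f k) = real CARD('n) * s - s + f i"
  using sum_except[of i f "\<lambda>_. s", OF assms] by simp

lemma grad_Q_gen:
  fixes x :: "real^'n::finite"
  assumes Q: "x = a *\<^sub>R ones + b *\<^sub>R ebasis i" and qi: "qn x i = r" and qk: "\<And>k. k \<noteq> i \<Longrightarrow> qn x k = s"
  shows "grad x = ((2/s) * (real CARD('n) * a - 1) - (2/s) * a + (2/r) * a) *\<^sub>R ones
     + ((2/s) * real CARD('n) * b - (2/s) * (b-1) + (2/r) * (b-1)) *\<^sub>R ebasis i"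
proof -
  have "grad x = (\<Sum>k\<in>UNIV. (2/s) *\<^sub>R (x - ebasis k)) - (2/s) *\<^sub>R (x - ebasis i) + (2/r) *\<^sub>R (x - ebasis i)"
    unfolding grad_def using sum_except[of i "\<lambda>k. (2 / qn x k) *\<^sub>R (x - ebasis k)" "\<lambda>k. (2/s) *\<^sub>R (x - ebasis k)"] qk qi by simp
  also have "\<dots> = (2/s) *\<^sub>R (real CARD('n) *\<^sub>R x - ones) - (2/s) *\<^sub>R (x - ebasis i) + (2/r) *\<^sub>R (x - ebasis i)"
    by (simp add: scaleR_sum_right[symmetric] sum_diff_basis)
  also have "\<dots> = ((2/s) * (real CARD('n) * a - 1) - (2/s) * a + (2/r) * a) *\<^sub>R ones
     + ((2/s) * real CARD('n) * b - (2/s) * (b-1) + (2/r) * (b-1)) *\<^sub>R ebasis i"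
    unfolding Q vec_eq_iff by (simp add: algebra_simps divide_inverse)
  finally show ?thesis .
qed

lemma LH_Q_gen:
  fixes x :: "real^'n::finite"
  assumes Q: "x = a *\<^sub>R ones + b *\<^sub>R ebasis i" and qi: "qn x i = r" and qk: "\<And>k. k \<noteq> i \<Longrightarrow> qn x k = s"
  shows "LH x h = muQ (real CARD('n)) r s *\<^sub>R h + F1 (real CARD('n)) a b r s (ones \<bullet> h) (h $ i) *\<^sub>R ones
     + F2 (real CARD('n)) a b r s (ones \<bullet> h) (h $ i) *\<^sub>R ebasis i"
proof -
  let ?N = "real CARD('n)"
  have 1: "(\<Sum>k\<in>UNIV. (2 / qn x k) *\<^sub>R h) = (?N * (2/s) - 2/s + 2/r) *\<^sub>R h"
    unfolding scaleR_sum_left[symmetric] by (subst sum_except_real[of i _ "2/s"]) (auto simp: qk qi)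
  have 2: "(\<Sum>k\<in>UNIV. (4 / (qn x k)^2) *\<^sub>R (((x - ebasis k) \<bullet> h) *\<^sub>R (x - ebasis k)))
     = (\<Sum>k\<in>UNIV. (4 / s^2) *\<^sub>R (((x - ebasis k) \<bullet> h) *\<^sub>R (x - ebasis k)))
       - (4 / s^2) *\<^sub>R (((x - ebasis i) \<bullet> h) *\<^sub>R (x - ebasis i)) + (4 / r^2) *\<^sub>R (((x - ebasis i) \<bullet> h) *\<^sub>R (x - ebasis i))"
    using sum_except[of i "\<lambda>k. (4 / (qn x k)^2) *\<^sub>R (((x - ebasis k) \<bullet> h) *\<^sub>R (x - ebasis k))" "\<lambda>k. (4 / s^2) *\<^sub>R (((x - ebasis k) \<bullet> h) *\<^sub>R (x - ebasis k))"] qk qi by simp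
  have "LH x h = (?N * (2/s) - 2/s + 2/r) *\<^sub>R h
      - ((4 / s^2) *\<^sub>R ((?N * (x \<bullet> h) - ones \<bullet> h) *\<^sub>R x - (x \<bullet> h) *\<^sub>R ones + h)
       - (4 / s^2) *\<^sub>R (((x - ebasis i) \<bullet> h) *\<^sub>R (x - ebasis i)) + (4 / r^2) *\<^sub>R (((x - ebasis i) \<bullet> h) *\<^sub>R (x - ebasis i)))"
    unfolding LH_gen 1 2 sum_outer[symmetric]
    by (simp add: scaleR_sum_right)
  also have "\<dots> = muQ ?N r s *\<^sub>R h + F1 ?N a b r s (ones \<bullet> h) (h $ i) *\<^sub>R ones
     + F2 ?N a b r s (ones \<bullet> h) (h $ i) *\<^sub>R ebasis i"
    unfolding Q vec_eq_iff
    by (auto simp: algebra_simps F1_def F2_def muQ_def inner_add_left inner_diff_left ones_ones divide_inverse)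
  finally show ?thesis .
qed

lemma qn_expand: "qn x k = x \<bullet> x - 2 * x $ k + 1"
  unfolding qn_def by (simp add: inner_diff_left inner_diff_right inner_commute)

lemma Q_eq: "Qpt i = (2 / (real CARD('n::finite) * (real CARD('n) - 1))) *\<^sub>R (ones::real^'n)
   + ((real CARD('n) - 3) / (real CARD('n) - 1)) *\<^sub>R ebasis i"
  by (simp add: Qpt_def bary_eq)

lemma Q_comp: "(Qpt i :: real^'n::finite) $ k = 2 / (real CARD('n) * (real CARD('n) - 1)) + (if k = i then (real CARD('n) - 3) / (real CARD('n) - 1) else 0)"
  by (simp add: Q_eq)

lemma QQ: "(Qpt i :: real^'n::finite) \<bullet> Qpt i = real CARD('n) * (2 / (real CARD('n) * (real CARD('n) - 1)))^2
   + 2 * (2 / (real CARD('n) * (real CARD('n) - 1))) * ((real CARD('n) - 3) / (real CARD('n) - 1))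
   + ((real CARD('n) - 3) / (real CARD('n) - 1))^2"
  by (simp add: Q_eq inner_add_left inner_add_right ones_ones power2_eq_square algebra_simps)

lemma qn_zero_iff: "qn x k = 0 \<longleftrightarrow> x = ebasis k"
  unfolding qn_def by simp

lemma Q_main:
  assumes N4: "CARD('n::finite) \<ge> 4"
  shows "nondegenerate_critical_point flog (Qpt i :: real^'n) \<and> (\<exists>H. has_hessian flog H (Qpt i :: real^'n) \<and> neg_index H = 1)"
proof -
  define n where "n = real CARD('n)"
  define m where "m = n - 1"
  define k where "k = n - 2"
  have n4: "n \<ge> 4" using N4 by (simp add: n_def)
  note sc = sc_qi[OF n4 m_def] sc_qk[OF n4 m_def k_def] sc_g1[OF n4 m_def k_def] sc_g2[OF n4 m_def k_def]
    sc_mu[OF n4 m_def k_def] sc_e1a[OF n4 m_def k_def] sc_e1b[OF n4 m_def k_def] sc_e2a[OF n4 m_def k_def] sc_e2b[OF n4 m_def k_def]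
  define a where "a = 2 / (n * m)"
  define b where "b = (n - 3) / m"
  define r where "r = 4 / (n * m)"
  define s where "s = 2 * k / n"
  define x where "x = (Qpt i :: real^'n)"
  have Q: "x = a *\<^sub>R ones + b *\<^sub>R ebasis i" unfolding x_def Q_eq a_def b_def n_def m_def ..
  have qi: "qn x i = r"
    unfolding x_def qn_expand QQ Q_comp using sc(1) by (simp add: r_def n_def m_def)
  have qk: "qn x j = s" if "j \<noteq> i" for j
    unfolding x_def qn_expand QQ Q_comp using sc(2) that by (simp add: s_def n_def m_def k_def)
  have rpos: "r > 0" "s > 0" using n4 by (auto simp: r_def s_def m_def k_def)
  have xnb: "x \<notin> range ebasis"
  proof
    assume "x \<in> range ebasis"
    then obtain j where "x = ebasis j" by auto
    then have "qn x j = 0" by (simp add: qn_zero_iff)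
    then show False using qi qk rpos by (cases "j = i") auto
  qed
  have c1: "(2/s) * (n * a - 1) - (2/s) * a + (2/r) * a = 0" using sc(3) unfolding a_def r_def s_def .
  have c2: "(2/s) * n * b - (2/s) * (b-1) + (2/r) * (b-1) = 0" using sc(4) unfolding b_def r_def s_def .
  have g0: "grad x = 0"
    using grad_Q_gen[OF Q qi qk] c1 c2 by (simp add: n_def)
  define H where "H = matrix (LH x)"
  define mu where "mu = muQ n r s"
  define l1 where "l1 = n^2 * m / (2*k)"
  define l2 where "l2 = - (n^2 * (n - 3) / (2 * k))"
  have Hf: "\<And>h. H *v h = mu *\<^sub>R h + F1 n a b r s (ones \<bullet> h) (h $ i) *\<^sub>R ones + F2 n a b r s (ones \<bullet> h) (h $ i) *\<^sub>R ebasis i"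
    unfolding H_def LH_matrix[OF xnb] n_def mu_def by (rule LH_Q_gen[OF Q qi qk])
  have mu_eq: "mu = n^3 * (n - 3) / (2 * k^2)" using sc(5) unfolding mu_def r_def s_def .
  have e1a: "F2 n a b r s n 1 = 0" using sc(6) unfolding a_def b_def r_def s_def .
  have e1b: "mu + F1 n a b r s n 1 = l1" using sc(7) unfolding mu_def a_def b_def r_def s_def l1_def .
  have e2a: "mu + F1 n a b r s 0 (1 - n) = l2" using sc(8) unfolding mu_def a_def b_def r_def s_def l2_def .
  have e2b: "- n * mu + F2 n a b r s 0 (1 - n) = - n * l2" using sc(9) unfolding mu_def a_def b_def r_def s_def l2_def .
  have oo: "ones \<bullet> (ones::real^'n) = n" by (simp add: ones_ones n_def)
  have "H *v ones = (mu + F1 n a b r s n 1) *\<^sub>R ones"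
    using Hf[of ones] oo e1a by (simp add: scaleR_add_left)
  then have L1: "H *v ones = l1 *\<^sub>R ones" using e1b by simp
  define w where "w = ones - n *\<^sub>R ebasis i"
  have ow: "ones \<bullet> w = 0" "w $ i = 1 - n" by (simp_all add: w_def inner_diff_right oo)
  have "H *v w = mu *\<^sub>R w + F1 n a b r s 0 (1 - n) *\<^sub>R ones + F2 n a b r s 0 (1 - n) *\<^sub>R ebasis i"
    using Hf[of w] ow by simp
  also have "\<dots> = (mu + F1 n a b r s 0 (1 - n)) *\<^sub>R ones + (- n * mu + F2 n a b r s 0 (1 - n)) *\<^sub>R ebasis i"
    by (simp add: w_def algebra_simps)
  also have "\<dots> = l2 *\<^sub>R w" unfolding e2a e2b by (simp add: w_def algebra_simps)
  finally have L2: "H *v w = l2 *\<^sub>R w" .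
  have sg: "l1 > 0" "mu > 0" "l2 < 0" using n4 unfolding l1_def mu_eq l2_def m_def k_def
    by (auto intro!: divide_pos_pos mult_pos_pos)
  have N2: "CARD('n) \<ge> 2" using N4 by simp
  note C = eig_Q_conseq[of H mu "F1 n a b r s" i "F2 n a b r s", OF Hf _ _ L1 L2[unfolded w_def n_def] N2 sg]
  have f0: "F1 n a b r s 0 0 = 0" "F2 n a b r s 0 0 = 0" by (simp_all add: F1_def F2_def)
  have "nondegenerate_critical_point flog x"
    unfolding nondegenerate_critical_point_def
    using critical_gen[OF xnb g0] hessian_gen[OF xnb] C(2)[OF f0] by (auto simp: H_def)
  moreover have "has_hessian flog H x \<and> neg_index H = 1"
    using hessian_gen[OF xnb] C(1)[OF f0] by (simp add: H_def)
  ultimately show ?thesis unfolding x_def by blast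
qed

lemma ln_lb:
  fixes u :: real assumes u: "-1/5 \<le> u"
  shows "u - 5/8 * u^2 \<le> ln (1 + u)"
proof -
  define g where "g x = ln (1 + x) - x + 5/8 * x^2" for x :: real
  have D: "DERIV g x :> (1 / (1 + x) - 1 + 5/4 * x)" if "-1/5 \<le> x" for x
    unfolding g_def using that
    by (auto intro!: derivative_eq_intros simp: power2_eq_square field_simps)
  have key: "1 / (1 + x) - 1 + 5/4 * x = x * (1/4 + 5/4 * x) / (1 + x)" if "-1/5 \<le> x" for x :: real
    using that by (simp add: field_simps)
  have "g 0 \<le> g u"
  proof (cases "u \<ge> 0")
    case True
    show ?thesis
    proof (rule DERIV_nonneg_imp_nondecreasing[of 0 u g, OF True])
      fix x :: real assume x: "0 \<le> x" "x \<le> u"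
      show "\<exists>y. DERIV g x :> y \<and> y \<ge> 0"
        using D[of x] key[of x] x by (auto intro!: exI[of _ "1 / (1 + x) - 1 + 5/4 * x"] divide_nonneg_pos mult_nonneg_nonneg)
    qed
  next
    case False
    show ?thesis
    proof (rule DERIV_nonpos_imp_nonincreasing[of u 0 g])
      show "u \<le> 0" using False by simp
      fix x :: real assume x: "u \<le> x" "x \<le> 0"
      have "x * (1/4 + 5/4 * x) / (1 + x) \<le> 0"
        using x u by (intro divide_nonpos_pos mult_nonpos_nonneg) auto
      then show "\<exists>y. DERIV g x :> y \<and> y \<le> 0"
        using D[of x] key[of x] x u by auto
    qed
  qed
  then show ?thesis by (simp add: g_def)
qed

lemma sum_outer_bary: "(\<Sum>k\<in>UNIV. ((bary - ebasis k) \<bullet> h) *\<^sub>R (bary - ebasis k)) = h - (ones \<bullet> h) *\<^sub>R (bary::real^'n::finite)"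
  unfolding sum_outer by (simp add: bary_inner bary_eq)

lemma local_min_bary:
  assumes N4: "CARD('n::finite) \<ge> 4"
  shows "local_min flog (bary::real^'n)"
  unfolding local_min_def
proof (intro exI[of _ "1 / (20 * real CARD('n))"] conjI ballI)
  define N where "N = real CARD('n)"
  define r where "r = (N - 1) / N"
  have N4': "N \<ge> 4" using N4 by (simp add: N_def)
  have rr: "r \<ge> 3/4" "r \<le> 1" using N4' by (auto simp: r_def field_simps)
  show "0 < 1 / (20 * real CARD('n))" by simp
  fix y :: "real^'n" assume "y \<in> ball bary (1 / (20 * real CARD('n)))"
  then have dy: "norm (y - bary) < 1 / (20 * N)" by (simp add: dist_norm norm_minus_commute N_def)
  define d where "d = y - bary"
  define s where "s = d \<bullet> d"
  define t where "t k = d \<bullet> (bary - ebasis k)" for k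
  define u where "u k = (2 * t k + s) / r" for k
  have qb: "qn (bary::real^'n) k = r" for k unfolding qn_bary r_def N_def ..
  have qy: "qn y k = r + 2 * t k + s" for k
  proof -
    have e: "y - ebasis k = d + (bary - ebasis k)" by (simp add: d_def)
    have g: "(a + b) \<bullet> (a + b) = a \<bullet> a + 2 * (a \<bullet> b) + b \<bullet> b" for a b :: "real^'n"
      by (simp add: inner_add_left inner_add_right inner_commute)
    show ?thesis unfolding qn_def e g using qb[of k, unfolded qn_def] by (simp add: t_def s_def)
  qed
  have nd: "norm d < 1 / (20 * N)" using dy by (simp add: d_def)
  have s_nd: "s = (norm d)^2" by (simp add: s_def power2_norm_eq_inner)
  have nv: "norm (bary - ebasis k) \<le> 1" for k :: 'n
  proof -
    have "(norm (bary - (ebasis k :: real^'n)))^2 \<le> 1^2" using qb[of k] rr by (simp add: norm_qn)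
    then show ?thesis by (rule power2_le_imp_le) simp
  qed
  have tb: "\<bar>t k\<bar> \<le> norm d" for k
  proof -
    have "\<bar>t k\<bar> \<le> norm d * norm (bary - ebasis k)" unfolding t_def by (rule Cauchy_Schwarz_ineq2)
    also have "\<dots> \<le> norm d" using nv[of k] by (simp add: mult_left_le)
    finally show ?thesis .
  qed
  have Npos: "N > 0" using N4' by simp
  have nd2: "norm d \<le> 1 / 80"
  proof -
    have "1 / (20 * N) \<le> 1 / 80" using N4' by (simp add: field_simps)
    then show ?thesis using nd by simp
  qed
  have s_small: "N * s \<le> 1 / 400"
  proof -
    have "N * (norm d)^2 \<le> N * (1 / (20 * N))^2"
      using nd Npos by (intro mult_left_mono power_mono) auto
    also have "\<dots> = 1 / (400 * N)" using Npos by (simp add: field_simps power2_eq_square)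
    also have "\<dots> \<le> 1 / 400" using N4' by (simp add: field_simps)
    finally show ?thesis by (simp add: s_nd)
  qed
  have s0: "s \<ge> 0" by (simp add: s_def)
  have ub: "u k \<ge> -1/5" for k
  proof -
    have "2 * t k + s \<ge> - 2 * norm d" using tb[of k] s0 by linarith
    also have "- 2 * norm d \<ge> - 1/5 * r" using nd2 rr by linarith
    finally show ?thesis unfolding u_def using rr by (simp add: field_simps)
  qed
  have qyu: "qn y k = r * (1 + u k)" for k
    unfolding qy u_def using rr by (simp add: field_simps)
  have upos: "1 + u k > 0" for k using ub[of k] by linarith
  have rpos: "r > 0" using rr by simp
  have qypos: "qn y k > 0" for k unfolding qyu using upos rpos by simp
  have ynb: "y \<notin> range ebasis"
  proof
    assume "y \<in> range ebasis" then obtain k where "y = ebasis k" by auto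
    then have "qn y k = 0" by (simp add: qn_def)
    then show False using qypos[of k] by simp
  qed
  have N2: "CARD('n) \<ge> 2" using N4 by simp
 have fy: "flog y = (\<Sum>k\<in>(UNIV::'n set). ln r) + (\<Sum>k\<in>UNIV. ln (1 + u k))"
    unfolding flog_eq[OF ynb] qyu using upos rpos by (simp add: sum.distrib ln_mult_pos)
  have fb: "flog (bary::real^'n) = (\<Sum>k\<in>(UNIV::'n set). ln r)"
    unfolding flog_eq[OF bary_nonbasis[OF N2]] qb ..
  have st: "(\<Sum>k\<in>UNIV. t k) = 0"
    unfolding t_def inner_sum_right[symmetric] sum_diff_basis by (simp add: bary_eq)
  have st2: "(\<Sum>k\<in>UNIV. (t k)^2) \<le> s"
  proof -
    have "(\<Sum>k\<in>UNIV. (t k)^2) = d \<bullet> (\<Sum>k\<in>UNIV. ((bary - ebasis k) \<bullet> d) *\<^sub>R (bary - ebasis k))"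
      unfolding inner_sum_right t_def by (simp add: power2_eq_square inner_commute)
    also have "\<dots> = s - (ones \<bullet> d) * (d \<bullet> bary)"
      unfolding sum_outer_bary by (simp add: s_def inner_diff_right)
    also have "(ones \<bullet> d) * (d \<bullet> bary) = (ones \<bullet> d)^2 / N"
      by (simp add: inner_commute bary_inner N_def power2_eq_square)
    finally show ?thesis using Npos by simp
  qed
  have su: "(\<Sum>k\<in>UNIV. u k) = N * s / r"
    unfolding u_def sum_divide_distrib[symmetric] sum.distrib sum_distrib_left[symmetric] st
    by (simp add: N_def)
  have su2: "(\<Sum>k\<in>UNIV. (u k)^2) \<le> (4 * s + N * s^2) / r^2"
  proof -
    have "(\<Sum>k\<in>UNIV. (u k)^2) = (4 * (\<Sum>k\<in>UNIV. (t k)^2) + 4 * s * (\<Sum>k\<in>UNIV. t k) + N * s^2) / r^2"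
      unfolding u_def power_divide sum_divide_distrib[symmetric]
      by (simp add: sum.distrib sum_distrib_left[symmetric] power2_eq_square algebra_simps N_def)
         (simp add: sum_distrib_left sum_distrib_right mult_ac)
    also have "\<dots> \<le> (4 * s + N * s^2) / r^2"
      unfolding st using st2 rpos by (intro divide_right_mono) auto
    finally show ?thesis .
  qed
  have "(\<Sum>k\<in>UNIV. ln (1 + u k)) \<ge> (\<Sum>k\<in>UNIV. u k - 5/8 * (u k)^2)"
    by (intro sum_mono ln_lb ub)
  also have "(\<Sum>k\<in>UNIV. u k - 5/8 * (u k)^2) = N * s / r - 5/8 * (\<Sum>k\<in>UNIV. (u k)^2)"
    by (simp add: sum_subtractf sum_distrib_left[symmetric] su sum_divide_distrib[symmetric])
  finally have L: "(\<Sum>k\<in>UNIV. ln (1 + u k)) \<ge> N * s / r - 5/8 * ((4 * s + N * s^2) / r^2)"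
    using su2 by linarith
  have "N * s / r - 5/8 * ((4 * s + N * s^2) / r^2) = s * (N * r - 5/2 - 5/8 * (N * s)) / r^2"
    using rpos by (simp add: field_simps power2_eq_square)
  also have "N * r = N - 1" using Npos by (simp add: r_def)
  also have "s * (N - 1 - 5/2 - 5/8 * (N * s)) / r^2 \<ge> 0"
    using s0 s_small N4' rpos by (intro divide_nonneg_pos mult_nonneg_nonneg) auto
  finally have "(\<Sum>k\<in>UNIV. ln (1 + u k)) \<ge> 0" using L by linarith
  then show "flog (bary::real^'n) \<le> flog y" using fy fb by simp
qed

lemma sc_nu:
  fixes n m :: real assumes "n \<ge> 4" "m = n - 1"
  shows "2 * n^2 / m - 4 * n^2 / m^2 = 2 * (n - 3) * (n / m)^2"
proof -
  have "m \<noteq> 0" using assms by auto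
  then show ?thesis apply (simp add: field_simps power2_eq_square)
    unfolding assms(2) by (simp add: algebra_simps)
qed

lemma minima: "{x::real^'n::finite. \<forall>y::real^'n. Fprod x \<le> Fprod y} = range ebasis"
proof (rule set_eqI, rule iffI)
  fix x :: "real^'n" assume "x \<in> {x::real^'n. \<forall>y::real^'n. Fprod x \<le> Fprod y}"
  then have "Fprod x \<le> Fprod (ebasis undefined :: real^'n)" by blast
  also have "Fprod (ebasis undefined :: real^'n) = 0" unfolding Fprod_def
    by (rule prod_zero) auto
  finally have "Fprod x \<le> 0" .
  moreover have "Fprod x \<ge> 0" unfolding Fprod_def by (intro prod_nonneg) auto
  ultimately have "Fprod x = 0" by simp
  then obtain k where "(norm (x - ebasis k))^2 = 0" unfolding Fprod_def by auto
  then show "x \<in> range ebasis" by auto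
next
  fix x :: "real^'n" assume "x \<in> range ebasis"
  then obtain k where x: "x = ebasis k" by auto
  have "Fprod x = 0" unfolding Fprod_def x by (rule prod_zero) auto
  moreover have "Fprod y \<ge> 0" for y :: "real^'n" unfolding Fprod_def by (intro prod_nonneg) auto
  ultimately show "x \<in> {x::real^'n. \<forall>y::real^'n. Fprod x \<le> Fprod y}" by simp
qed

theorem proposition7p3:
  assumes "CARD('n::finite) \<ge> 4"
  shows "{x::real^'n. \<forall>y::real^'n. Fprod x \<le> Fprod y} = range ebasis
    \<and> critical_point flog (bary::real^'n)
    \<and> (\<exists>H. has_hessian flog H (bary::real^'n)
          \<and> H *v bary = (2 * real CARD('n)^2 / (real CARD('n) - 1)) *\<^sub>R bary
          \<and> eig_mult H (2 * real CARD('n)^2 / (real CARD('n) - 1)) = 1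
          \<and> eig_mult H (2 * (real CARD('n) - 3) * (real CARD('n) / (real CARD('n) - 1))^2)
              = CARD('n) - 1)
    \<and> nondegenerate_critical_point flog (bary::real^'n)
    \<and> local_min flog (bary::real^'n)
    \<and> (\<forall>i::'n. nondegenerate_critical_point flog (Qpt i)
          \<and> (\<exists>H. has_hessian flog H (Qpt i) \<and> neg_index H = 1))"
proof -
  define N where "N = real CARD('n)"
  have N4: "N \<ge> 4" using assms by (simp add: N_def)
  have N2: "CARD('n) \<ge> 2" using assms by simp
  note bnb = bary_nonbasis[OF N2]
  define A where "A = 2 * N^2 / (N - 1)"
  define C where "C = 4 * N^2 / (N - 1)^2"
  define nu where "nu = A - C"
  have nu_eq: "nu = 2 * (N - 3) * (N / (N - 1))^2" unfolding nu_def A_def C_def using sc_nu[OF N4 refl] .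
  have Cnz: "C \<noteq> 0" using N4 by (simp add: C_def)
  have Apos: "A > 0" using N4 by (simp add: A_def)
  have nupos: "nu > 0" unfolding nu_eq using N4 by simp
  define H where "H = matrix (LH (bary::real^'n))"
  have Hf: "H *v h = nu *\<^sub>R h + (C * (ones \<bullet> h)) *\<^sub>R bary" for h
    unfolding H_def LH_matrix[OF bnb] LH_bary[OF N2] nu_def A_def C_def N_def ..
  note E = eig_bary_gen[of H nu C, OF Hf Cnz]
  have AC: "nu + C = A" by (simp add: nu_def)
  have hess: "has_hessian flog H (bary::real^'n)" unfolding H_def by (rule hessian_gen[OF bnb])
  have crit: "critical_point flog (bary::real^'n)" by (rule critical_gen[OF bnb grad_bary])
  have part3: "\<exists>H. has_hessian flog H (bary::real^'n)
          \<and> H *v bary = (2 * real CARD('n)^2 / (real CARD('n) - 1)) *\<^sub>R bary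
          \<and> eig_mult H (2 * real CARD('n)^2 / (real CARD('n) - 1)) = 1
          \<and> eig_mult H (2 * (real CARD('n) - 3) * (real CARD('n) / (real CARD('n) - 1))^2)
              = CARD('n) - 1"
  proof (rule exI[of _ H], intro conjI)
    have A': "A = 2 * real CARD('n)^2 / (real CARD('n) - 1)" by (simp add: A_def N_def)
    have nu': "nu = 2 * (real CARD('n) - 3) * (real CARD('n) / (real CARD('n) - 1))^2" by (simp add: nu_eq N_def)
    show "has_hessian flog H bary" by (rule hess)
    show "H *v bary = (2 * real CARD('n)^2 / (real CARD('n) - 1)) *\<^sub>R bary" using E(1) unfolding AC A' .
    show "eig_mult H (2 * real CARD('n)^2 / (real CARD('n) - 1)) = 1" using E(2) unfolding AC A' .
    show "eig_mult H (2 * (real CARD('n) - 3) * (real CARD('n) / (real CARD('n) - 1))^2) = CARD('n) - 1"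
      using E(3) unfolding nu' .
  qed
  have det: "det H \<noteq> 0"
  proof (rule det_nz_of_ker)
    fix h assume h0: "H *v h = 0"
    have "ones \<bullet> (H *v h) = (nu + C) * (ones \<bullet> h)"
      unfolding Hf by (simp add: inner_add_right ones_bary algebra_simps)
    then have "ones \<bullet> h = 0" using h0 Apos AC by simp
    then have "nu *\<^sub>R h = 0" using h0 Hf[of h] by simp
    then show "h = 0" using nupos by simp
  qed
  have ndb: "nondegenerate_critical_point flog (bary::real^'n)"
    unfolding nondegenerate_critical_point_def using crit hess det by blast
  show ?thesis
    using minima crit part3 ndb local_min_bary[OF assms] Q_main[OF assms] by blast
qed

end
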